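(* Assume $\rho=\rho_1$. Let $Y=(-\infty,1]\sqcup\big([0,\rho]\times\{\infty\}\big)$ with the following topology: $(-\infty,1]$ is an open subset carrying its usual topology; for $x\in[0,\rho]$, a base of neighborhoods of $(x,\infty)$ is formed by the sets $$\{(y,\infty): y\in[0,\rho],\ |y-x|<\varepsilon\}\ \cup\ \bigcup_{n>N}\Big(\big((-1)^n x-2\lfloor n/2\rfloor\rho-\varepsilon,\ (-1)^n x-2\lfloor n/2\rfloor\rho+\varepsilon\big)\cap(-\infty,1]\Big),$$ for $\varepsilon>0$, $N\in\mathbb N$. Then $(\widetilde X,\widetilde f)$ is topologically conjugate to $(Y,g)$, where $g$ is the homeomorphism of $Y$ given by $g(x)=\frac{x-\rho}{1-\rho}$ for $x\in(\rho,1]$, $g(x)=x-\rho$ for $x\in(-\infty,\rho]$, and $g(x,\infty)=(\rho-x,\infty)$ for $x\in[0,\rho]$. The conjugating homeomorphism maps $\widetilde X_1$ onto $(-\infty,1]$ and $\widetilde X\setminus\widetilde X_1$ onto $[0,\rho]\times\{\infty\}$. In particular $\widetilde f$ is an increasing map on the ray $(-\infty,1]$ with fixed point $1$, and an involution on $[0,\rho]\times\{\infty\}$.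
   Context: Standing setup. Fix real numbers $\rho,\delta,\gamma,\alpha$ with $0<\rho<1$, $\delta>0$, $\gamma>-\delta/\rho$, $-\delta/\rho<\alpha<0$. Define $f:[0,1]\to[0,1]$ by $f(x)=f_0(x):=\frac{\alpha x-\alpha\rho}{\gamma x+\delta}$ for $x\in[0,\rho]$ and $f(x)=f_1(x):=\frac{x-\rho}{1-\rho}$ for $x\in(\rho,1]$. Put $\rho_1:=f_0(0)$. The inverse limit is $\widetilde X=\{(x_0,x_1,\dots)\in[0,1]^{\mathbb N}: f(x_{n+1})=x_n \ \forall n\}$ with the product topology; the shift is $\widetilde f(x_0,x_1,\dots)=(f(x_0),x_0,x_1,\dots)$. $\widetilde X_1:=\{(x_0,x_1,\dots)\in\widetilde X:\lim_n x_n=1\}$. $\lfloor\cdot\rfloor$ is the integer part. *)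

theory Defs
  imports "HOL-Analysis.Analysis"
begin

definition f0 :: "real \<Rightarrow> real \<Rightarrow> real \<Rightarrow> real \<Rightarrow> real \<Rightarrow> real" where
  "f0 \<rho> \<delta> \<gamma> \<alpha> x = (\<alpha> * x - \<alpha> * \<rho>) / (\<gamma> * x + \<delta>)"

definition f1 :: "real \<Rightarrow> real \<Rightarrow> real" where
  "f1 \<rho> x = (x - \<rho>) / (1 - \<rho>)"

definition fmap :: "real \<Rightarrow> real \<Rightarrow> real \<Rightarrow> real \<Rightarrow> real \<Rightarrow> real" where
  "fmap \<rho> \<delta> \<gamma> \<alpha> x = (if x \<le> \<rho> then f0 \<rho> \<delta> \<gamma> \<alpha> x else f1 \<rho> x)"

definition invlim :: "(real \<Rightarrow> real) \<Rightarrow> (nat \<Rightarrow> real) set" where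
  "invlim f = {x. (\<forall>n. x n \<in> {0..1}) \<and> (\<forall>n. f (x (Suc n)) = x n)}"

definition invlim_top :: "(real \<Rightarrow> real) \<Rightarrow> (nat \<Rightarrow> real) topology" where
  "invlim_top f = subtopology (powertop_real UNIV) (invlim f)"

definition shift :: "(real \<Rightarrow> real) \<Rightarrow> (nat \<Rightarrow> real) \<Rightarrow> (nat \<Rightarrow> real)" where
  "shift f x = (\<lambda>n. case n of 0 \<Rightarrow> f (x 0) | Suc m \<Rightarrow> x m)"

definition invlim1 :: "(real \<Rightarrow> real) \<Rightarrow> (nat \<Rightarrow> real) set" where
  "invlim1 f = {x \<in> invlim f. x \<longlonglongrightarrow> 1}"

text \<open>The space Y = (-infty,1] disjoint-union [0,rho] x {infty}, encoded in real + real: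
  Inl x stands for x in (-infty,1], Inr x stands for (x,infty), x in [0,rho].\<close>

definition Ycarrier :: "real \<Rightarrow> (real + real) set" where
  "Ycarrier \<rho> = Inl ` {..1} \<union> Inr ` {0..\<rho>}"

definition Ybasic :: "real \<Rightarrow> (real + real) \<Rightarrow> (real + real) set set" where
  "Ybasic \<rho> p = (case p of
     Inl x \<Rightarrow> {Inl ` ({x - \<epsilon> <..< x + \<epsilon>} \<inter> {..1}) | \<epsilon>. \<epsilon> > 0}
   | Inr x \<Rightarrow> {Inr ` {y \<in> {0..\<rho>}. \<bar>y - x\<bar> < \<epsilon>}
              \<union> Inl ` (\<Union>n\<in>{n::nat. n > N}.
                   {(-1)^n * x - 2 * of_int \<lfloor>real n / 2\<rfloor> * \<rho> - \<epsilon> <..<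
                    (-1)^n * x - 2 * of_int \<lfloor>real n / 2\<rfloor> * \<rho> + \<epsilon>} \<inter> {..1})
              | \<epsilon> N. \<epsilon> > 0})"

definition Ytop :: "real \<Rightarrow> (real + real) topology" where
  "Ytop \<rho> = topology (\<lambda>U. U \<subseteq> Ycarrier \<rho> \<and> (\<forall>p\<in>U. \<exists>B\<in>Ybasic \<rho> p. B \<subseteq> U))"

definition gmap :: "real \<Rightarrow> (real + real) \<Rightarrow> (real + real)" where
  "gmap \<rho> p = (case p of
     Inl x \<Rightarrow> (if x > \<rho> then Inl ((x - \<rho>) / (1 - \<rho>)) else Inl (x - \<rho>))
   | Inr x \<Rightarrow> Inr (\<rho> - x))"

end

theory Submission
  imports Defs
begin

locale L =
  fixes \<rho> \<delta> \<gamma> \<alpha> :: real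
  assumes r0: "0 < \<rho>" and r1: "\<rho> < 1" and d0: "\<delta> > 0" and g0: "\<gamma> > - \<delta> / \<rho>"
    and a0: "- \<delta> / \<rho> < \<alpha>" "\<alpha> < 0"
    and fix0: "\<rho> = f0 \<rho> \<delta> \<gamma> \<alpha> 0"
begin

lemma alpha_eq: "\<alpha> = - \<delta>"
proof -
  have "\<delta> * \<rho> = - (\<alpha> * \<rho>)" using fix0 r0 d0 by (auto simp: f0_def field_simps)
  then have "(\<delta> + \<alpha>) * \<rho> = 0" by (simp add: algebra_simps)
  then show ?thesis using r0 by simp
qed

lemma gd: "\<gamma> * \<rho> + \<delta> > 0"
  using g0 r0 by (simp add: field_simps)

lemma den_pos: "0 \<le> x \<Longrightarrow> x \<le> \<rho> \<Longrightarrow> \<gamma> * x + \<delta> > 0"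
proof (cases "\<gamma> \<ge> 0")
  case True
  assume "0 \<le> x" then show ?thesis using True d0 by (smt (verit) mult_nonneg_nonneg)
next
  case False
  assume "x \<le> \<rho>" then have "\<gamma> * x \<ge> \<gamma> * \<rho>" using False by (simp add: mult_left_mono_neg)
  then show ?thesis using gd by linarith
qed

abbreviation "F0 \<equiv> f0 \<rho> \<delta> \<gamma> \<alpha>"
abbreviation "fm \<equiv> fmap \<rho> \<delta> \<gamma> \<alpha>"

lemma F0_eq: "F0 x = \<delta> * (\<rho> - x) / (\<gamma> * x + \<delta>)"
  by (simp add: f0_def alpha_eq algebra_simps)

lemma F0_range: assumes "0 \<le> x" "x \<le> \<rho>" shows "0 \<le> F0 x" "F0 x \<le> \<rho>"
proof -
  have p: "\<gamma> * x + \<delta> > 0" using den_pos assms by auto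
  show "0 \<le> F0 x" unfolding F0_eq using p d0 assms by simp
  have "\<delta> * (\<rho> - x) \<le> \<rho> * (\<gamma> * x + \<delta>)"
  proof -
    have "\<rho> * (\<gamma> * x + \<delta>) - \<delta> * (\<rho> - x) = x * (\<gamma> * \<rho> + \<delta>)" by (simp add: algebra_simps)
    also have "\<dots> \<ge> 0" using gd assms by simp
    finally show ?thesis by simp
  qed
  then show "F0 x \<le> \<rho>" unfolding F0_eq using p by (simp add: divide_le_eq)
qed

lemma F0_invol: assumes "0 \<le> x" "x \<le> \<rho>" shows "F0 (F0 x) = x"
proof -
  have p: "\<gamma> * x + \<delta> > 0" using den_pos assms by auto
  have q: "\<gamma> * \<rho> + \<delta> > 0" by (rule gd)
  have e1: "\<rho> - F0 x = x * (\<gamma> * \<rho> + \<delta>) / (\<gamma> * x + \<delta>)"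
    unfolding F0_eq using p by (simp add: field_simps)
  have e2: "\<gamma> * F0 x + \<delta> = \<delta> * (\<gamma> * \<rho> + \<delta>) / (\<gamma> * x + \<delta>)"
    unfolding F0_eq using p by (simp add: field_simps)
  have "F0 (F0 x) = \<delta> * (\<rho> - F0 x) / (\<gamma> * F0 x + \<delta>)" by (rule F0_eq)
  also have "\<dots> = (\<delta> * (x * (\<gamma> * \<rho> + \<delta>))) / (\<delta> * (\<gamma> * \<rho> + \<delta>))"
    unfolding e1 e2 using p by (simp add: divide_simps del: mult_pos_pos)
  also have "\<dots> = x" using q d0 by simp

  finally show ?thesis .
qed

lemma F0_strict: assumes "0 \<le> x" "x < y" "y \<le> \<rho>" shows "F0 y < F0 x"
proof -
  have p: "\<gamma> * x + \<delta> > 0" "\<gamma> * y + \<delta> > 0" using den_pos assms by auto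
  have "\<delta> * (\<rho> - y) * (\<gamma> * x + \<delta>) < \<delta> * (\<rho> - x) * (\<gamma> * y + \<delta>)"
  proof -
    have "\<delta> * (\<rho> - x) * (\<gamma> * y + \<delta>) - \<delta> * (\<rho> - y) * (\<gamma> * x + \<delta>) = \<delta> * (y - x) * (\<gamma> * \<rho> + \<delta>)"
      by (simp add: algebra_simps)
    also have "\<dots> > 0" using gd d0 assms by simp
    finally show ?thesis by simp
  qed
  then show ?thesis unfolding F0_eq using p by (simp add: divide_simps)
qed

lemma F0_0: "F0 0 = \<rho>" using fix0 by simp
lemma F0_rho: "F0 \<rho> = 0" by (simp add: f0_def)

lemma F0_cont: "continuous_on {0..\<rho>} F0"
  unfolding f0_def
  by (intro continuous_intros) (use den_pos in force)

definition phi :: "real \<Rightarrow> real" where "phi x = (x + \<rho> - F0 x) / 2"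

lemma phi_strict: "0 \<le> x \<Longrightarrow> x < y \<Longrightarrow> y \<le> \<rho> \<Longrightarrow> phi x < phi y"
  using F0_strict[of x y] by (simp add: phi_def)

lemma phi_0: "phi 0 = 0" by (simp add: phi_def F0_0)
lemma phi_rho: "phi \<rho> = \<rho>" by (simp add: phi_def F0_rho)

lemma phi_range: "0 \<le> x \<Longrightarrow> x \<le> \<rho> \<Longrightarrow> 0 \<le> phi x \<and> phi x \<le> \<rho>"
  using phi_strict[of 0 x] phi_strict[of x \<rho>] phi_0 phi_rho by (cases "x = 0"; cases "x = \<rho>") auto

lemma phi_F0: assumes "0 \<le> x" "x \<le> \<rho>" shows "phi (F0 x) = \<rho> - phi x"
proof -
  have "phi (F0 x) = (F0 x + \<rho> - F0 (F0 x)) / 2" "phi x = (x + \<rho> - F0 x) / 2" by (simp_all add: phi_def)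
  then have "phi (F0 x) = (F0 x + \<rho> - x) / 2" "phi x = (x + \<rho> - F0 x) / 2" using F0_invol[OF assms] by simp_all
  then show ?thesis by (simp add: field_simps)
qed

lemma phi_cont: "continuous_on {0..\<rho>} phi"
  unfolding phi_def by (intro continuous_intros F0_cont) auto

abbreviation "F1 \<equiv> f1 \<rho>"

definition FF :: "nat \<Rightarrow> real \<Rightarrow> real" where "FF k y = 1 - (1 - y) / (1 - \<rho>) ^ k"

definition kk :: "real \<Rightarrow> nat" where "kk y = (LEAST k. FF k y \<le> \<rho>)"

definition Phi :: "real \<Rightarrow> real" where
  "Phi y = (if 1 \<le> y then 1 else 1 - (1 - \<rho>) ^ kk y * (1 - phi (FF (kk y) y)))"

lemma FF_Suc: "FF (Suc k) y = FF k (F1 y)"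
  using r1 by (simp add: FF_def f1_def field_simps)

lemma FF_0: "FF 0 y = y" by (simp add: FF_def)

lemma ex_k: assumes "y < 1" shows "\<exists>k. FF k y \<le> \<rho>"
proof -
  have "1 < 1 / (1 - \<rho>)" using r0 r1 by (simp add: field_simps)
  then obtain k where k: "(1 - \<rho>) / (1 - y) < (1 / (1 - \<rho>)) ^ k" using real_arch_pow by blast
  have "(1 - \<rho>) < (1 - y) / (1 - \<rho>) ^ k"
    using k assms r1 by (simp add: field_simps power_divide)
  then have "FF k y \<le> \<rho>" by (simp add: FF_def)
  then show ?thesis by blast
qed

lemma Phi_low: assumes "0 \<le> y" "y \<le> \<rho>" shows "Phi y = phi y"
proof -
  have "kk y = 0" unfolding kk_def using assms by (simp add: FF_0)
  then show ?thesis using assms r1 by (simp add: Phi_def FF_0)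
qed

lemma Phi_0: "Phi 0 = 0" using Phi_low[of 0] r0 phi_0 by simp
lemma Phi_1: "Phi 1 = 1" by (simp add: Phi_def)

lemma F1_1: "F1 1 = 1" using r1 by (simp add: f1_def)

lemma Phi_rec: assumes "\<rho> \<le> y" "y \<le> 1" shows "Phi y = \<rho> + (1 - \<rho>) * Phi (F1 y)"
proof (cases "y = \<rho>")
  case True
  then show ?thesis using Phi_low[of \<rho>] phi_rho r0 Phi_0 by (simp add: f1_def)
next
  case ne: False
  show ?thesis
  proof (cases "y = 1")
    case True then show ?thesis using F1_1 by (simp add: Phi_1)
  next
    case False
    then have y1: "y < 1" using assms by simp
    have fy1: "F1 y < 1" using y1 r1 by (simp add: f1_def field_simps)
    have gt: "\<rho> < y" using assms ne by simp
    obtain n where n: "FF n y \<le> \<rho>" using ex_k[OF y1] by blast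
    have "(LEAST k. FF k y \<le> \<rho>) = Suc (LEAST m. FF (Suc m) y \<le> \<rho>)"
      by (rule Least_Suc[where P="\<lambda>k. FF k y \<le> \<rho>", OF n]) (use gt in \<open>simp add: FF_0\<close>)
    then have "kk y = Suc (kk (F1 y))" unfolding kk_def FF_Suc .
    then show ?thesis using y1 fy1 r1 by (simp add: Phi_def FF_Suc algebra_simps)
  qed
qed

definition bb :: "nat \<Rightarrow> real" where "bb k = 1 - (1 - \<rho>) ^ Suc k"

lemma bb_0: "bb 0 = \<rho>" by (simp add: bb_def)
lemma bb_lt1: "bb k < 1" using r0 r1 by (simp add: bb_def)
lemma bb_ge: "\<rho> \<le> bb k"
proof -
  have "(1 - \<rho>) ^ Suc k \<le> (1 - \<rho>) ^ 1" by (rule power_decreasing) (use r0 r1 in auto)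
  then show ?thesis by (simp add: bb_def)
qed
lemma F1_bb: "F1 (bb (Suc k)) = bb k"
  using r1 by (simp add: bb_def f1_def field_simps)

lemma F1_mono: "x \<le> y \<Longrightarrow> F1 x \<le> F1 y" using r1 by (simp add: f1_def divide_right_mono)
lemma F1_strict: "x < y \<Longrightarrow> F1 x < F1 y" using r1 by (simp add: f1_def divide_strict_right_mono)
lemma F1_cont: "continuous_on A F1" unfolding f1_def by (intro continuous_intros) (use r1 in auto)

lemma Phi_ind: "continuous_on {0..bb k} Phi \<and> (\<forall>a c. 0 \<le> a \<longrightarrow> a < c \<longrightarrow> c \<le> bb k \<longrightarrow> Phi a < Phi c)
   \<and> Phi (bb k) = bb k"
proof (induction k)
  case 0
  have "continuous_on {0..\<rho>} Phi"
    using phi_cont by (rule continuous_on_eq) (simp add: Phi_low)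
  moreover have "\<forall>a c. 0 \<le> a \<longrightarrow> a < c \<longrightarrow> c \<le> \<rho> \<longrightarrow> Phi a < Phi c"
    using phi_strict Phi_low by simp
  ultimately show ?case using Phi_low[of \<rho>] phi_rho r0 by (simp add: bb_0)
next
  case (Suc k)
  note IHc = Suc.IH[THEN conjunct1] and IHs = Suc.IH[THEN conjunct2, THEN conjunct1]
    and IHv = Suc.IH[THEN conjunct2, THEN conjunct2]
  have img: "F1 y \<in> {0..bb k}" if "y \<in> {\<rho>..bb (Suc k)}" for y
    using that F1_mono[of \<rho> y] F1_mono[of y "bb (Suc k)"] F1_bb[of k] r1 by (auto simp: f1_def)
  have c1: "continuous_on {0..\<rho>} Phi"
    using phi_cont by (rule continuous_on_eq) (simp add: Phi_low)
  have c2': "continuous_on {\<rho>..bb (Suc k)} (\<lambda>y. \<rho> + (1 - \<rho>) * Phi (F1 y))"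
    by (intro continuous_intros continuous_on_compose2[OF IHc F1_cont]) (use img in auto)
  have c2: "continuous_on {\<rho>..bb (Suc k)} Phi"
  proof (rule continuous_on_eq[OF c2'])
    fix y assume "y \<in> {\<rho>..bb (Suc k)}"
    then show "\<rho> + (1 - \<rho>) * Phi (F1 y) = Phi y"
      using Phi_rec[of y] bb_lt1[of "Suc k"] by auto
  qed
  have "continuous_on ({0..\<rho>} \<union> {\<rho>..bb (Suc k)}) Phi"
    by (rule continuous_on_closed_Un[OF _ _ c1 c2]) auto
  moreover have "{0..\<rho>} \<union> {\<rho>..bb (Suc k)} = {0..bb (Suc k)}" using bb_ge[of "Suc k"] r0 by auto
  ultimately have C: "continuous_on {0..bb (Suc k)} Phi" by simp
  have S: "Phi a < Phi c" if "0 \<le> a" "a < c" "c \<le> bb (Suc k)" for a c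
  proof -
    have c1': "c \<le> 1" using that bb_lt1[of "Suc k"] by simp
    consider "c \<le> \<rho>" | "a \<le> \<rho>" "\<rho> < c" | "\<rho> < a" by linarith
    then show ?thesis
    proof cases
      case 1 then show ?thesis using that phi_strict Phi_low by simp
    next
      case 2
      have "Phi a \<le> \<rho>" using Phi_low[of a] phi_range[of a] 2 that by simp
      moreover have "0 < Phi (F1 c)"
      proof -
        have "0 < F1 c" using 2 r1 by (simp add: f1_def)
        moreover have "F1 c \<le> bb k" using img[of c] 2 that by auto
        ultimately show ?thesis using IHs Phi_0 by force
      qed
      moreover have "0 < (1 - \<rho>) * Phi (F1 c)" using calculation(2) r1 by simp
      moreover have "Phi c = \<rho> + (1 - \<rho>) * Phi (F1 c)" using Phi_rec[of c] 2 c1' by simp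
      ultimately show ?thesis by linarith
    next
      case 3
      have "Phi (F1 a) < Phi (F1 c)"
        using IHs img[of a] img[of c] F1_strict[OF that(2)] 3 that by auto
      then show ?thesis using Phi_rec[of a] Phi_rec[of c] 3 that c1' r1 by simp
    qed
  qed
  have "Phi (bb (Suc k)) = \<rho> + (1 - \<rho>) * bb k"
    using Phi_rec[of "bb (Suc k)"] bb_ge[of "Suc k"] bb_lt1[of "Suc k"] IHv F1_bb[of k] by simp
  also have "\<dots> = bb (Suc k)" by (simp add: bb_def algebra_simps)
  finally have V: "Phi (bb (Suc k)) = bb (Suc k)" .
  show ?case using C S V by blast
qed

lemma small_pow: "e > 0 \<Longrightarrow> \<exists>k. (1 - \<rho>) ^ Suc k < e"
proof -
  assume e: "e > 0"
  obtain n where n: "(1 - \<rho>) ^ n < e" using real_arch_pow_inv[OF e, of "1 - \<rho>"] r0 by auto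
  have "(1 - \<rho>) ^ Suc n \<le> (1 - \<rho>) ^ n" by (rule power_decreasing) (use r0 r1 in auto)
  then show ?thesis using n by (intro exI[of _ n]) simp
qed

lemma ex_bb: assumes "y < 1" shows "\<exists>k. y < bb k"
proof -
  obtain k where "(1 - \<rho>) ^ Suc k < 1 - y" using small_pow[of "1 - y"] assms by auto
  then have "y < bb k" by (simp add: bb_def)
  then show ?thesis by blast
qed

lemma Phi_strict: assumes "0 \<le> a" "a < c" "c \<le> 1" shows "Phi a < Phi c"
proof (cases "c < 1")
  case True
  then obtain k where "c < bb k" using ex_bb by blast
  then show ?thesis using Phi_ind[of k] assms by auto
next
  case False
  then have c: "c = 1" using assms by simp
  obtain k where k: "a < bb k" using ex_bb assms c by auto
  then have "Phi a < Phi (bb k)" using Phi_ind[of k] assms by blast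
  then show ?thesis using Phi_ind[of k] bb_lt1[of k] c Phi_1 by simp
qed

lemma Phi_mono: "0 \<le> a \<Longrightarrow> a \<le> c \<Longrightarrow> c \<le> 1 \<Longrightarrow> Phi a \<le> Phi c"
  using Phi_strict[of a c] by (cases "a = c") auto

lemma Phi_range: "0 \<le> y \<Longrightarrow> y \<le> 1 \<Longrightarrow> 0 \<le> Phi y \<and> Phi y \<le> 1"
  using Phi_mono[of 0 y] Phi_mono[of y 1] Phi_0 Phi_1 by auto

lemma Phi_gt: "\<rho> < y \<Longrightarrow> y \<le> 1 \<Longrightarrow> \<rho> < Phi y"
  using Phi_strict[of \<rho> y] Phi_low[of \<rho>] phi_rho r0 by simp

lemma Phi_le: "0 \<le> y \<Longrightarrow> y \<le> \<rho> \<Longrightarrow> Phi y \<le> \<rho>"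
  using Phi_low phi_range by simp

lemma Phi_pos: "0 < y \<Longrightarrow> y \<le> 1 \<Longrightarrow> 0 < Phi y"
  using Phi_strict[of 0 y] Phi_0 by simp

lemma Phi_F1: assumes "\<rho> < y" "y \<le> 1" shows "F1 (Phi y) = Phi (F1 y)"
  using Phi_rec[of y] assms r1 by (simp add: f1_def)

lemma Phi_inj: "0 \<le> a \<Longrightarrow> a \<le> 1 \<Longrightarrow> 0 \<le> c \<Longrightarrow> c \<le> 1 \<Longrightarrow> Phi a = Phi c \<Longrightarrow> a = c"
  using Phi_strict[of a c] Phi_strict[of c a] by (cases a c rule: linorder_cases) auto

lemma Phi_cont: "continuous_on {0..1} Phi"
  unfolding continuous_on_iff
proof (intro ballI allI impI)
  fix x e :: real assume x: "x \<in> {0..1}" and e: "0 < e"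
  show "\<exists>d>0. \<forall>x'\<in>{0..1}. dist x' x < d \<longrightarrow> dist (Phi x') (Phi x) < e"
  proof (cases "x < 1")
    case True
    then obtain k where k: "x < bb k" using ex_bb by blast
    have "continuous_on {0..bb k} Phi" using Phi_ind by blast
    then obtain d where d: "d > 0" "\<forall>x'\<in>{0..bb k}. dist x' x < d \<longrightarrow> dist (Phi x') (Phi x) < e"
      unfolding continuous_on_iff using x k e by (meson atLeastAtMost_iff less_imp_le)
    show ?thesis
    proof (intro exI[of _ "min d (bb k - x)"] conjI ballI impI)
      show "0 < min d (bb k - x)" using d k by simp
      fix x' assume "x' \<in> {0..1}" "dist x' x < min d (bb k - x)"
      then show "dist (Phi x') (Phi x) < e" using d(2) by (auto simp: dist_real_def)
    qed
  next
    case False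
    then have x1: "x = 1" using x by simp
    obtain k where k: "(1 - \<rho>) ^ Suc k < e" using small_pow e by blast
    show ?thesis
    proof (intro exI[of _ "1 - bb k"] conjI ballI impI)
      show "0 < 1 - bb k" using bb_lt1 by simp
      fix x' assume x': "x' \<in> {0..1}" "dist x' x < 1 - bb k"
      then have "bb k < x'" using x1 by (auto simp: dist_real_def)
      then have "Phi (bb k) \<le> Phi x'" using Phi_mono[of "bb k" x'] x' bb_ge[of k] r0 by auto
      then have "bb k \<le> Phi x'" using Phi_ind[of k] by simp
      moreover have "Phi x' \<le> 1" using Phi_range x' by auto
      ultimately show "dist (Phi x') (Phi x) < e" using x1 Phi_1 k by (auto simp: dist_real_def bb_def)
    qed
  qed
qed

abbreviation "X \<equiv> invlim fm"
abbreviation "X1 \<equiv> invlim1 fm"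

lemma X_D: "x \<in> X \<Longrightarrow> 0 \<le> x n \<and> x n \<le> 1 \<and> fm (x (Suc n)) = x n"
  by (auto simp: invlim_def)

lemma fm_low: "y \<le> \<rho> \<Longrightarrow> fm y = F0 y" by (simp add: fmap_def)
lemma fm_high: "\<rho> < y \<Longrightarrow> fm y = F1 y" by (simp add: fmap_def)

lemma up: assumes "x \<in> X" "\<rho> < x n" shows "\<rho> < x (Suc n)" "x n = F1 (x (Suc n))"
proof -
  show "\<rho> < x (Suc n)"
  proof (rule ccontr)
    assume "\<not> \<rho> < x (Suc n)"
    then have "x n = F0 (x (Suc n))" using X_D[OF assms(1), of n] fm_low by simp
    then show False using F0_range[of "x (Suc n)"] X_D[OF assms(1), of "Suc n"] assms(2) \<open>\<not> \<rho> < x (Suc n)\<close> by simp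
  qed
  then show "x n = F1 (x (Suc n))" using X_D[OF assms(1), of n] fm_high by simp
qed

lemma up_eq: assumes "x \<in> X" "\<rho> < x n" shows "x (Suc n) = \<rho> + (1 - \<rho>) * x n"
  using up[OF assms] r1 by (simp add: f1_def)

lemma up_le: assumes "x \<in> X" "\<rho> < x n" "n \<le> m" shows "\<rho> < x m"
  using assms(3,2)
proof (induction m rule: dec_induct)
  case base then show ?case by simp
next
  case (step m) then show ?case using up(1)[OF assms(1)] by blast
qed

lemma low: assumes "x \<in> X" "x (Suc n) \<le> \<rho>" shows "x n = F0 (x (Suc n))" "x n \<le> \<rho>" "F0 (x n) = x (Suc n)"
proof -
  show e: "x n = F0 (x (Suc n))" using X_D[OF assms(1), of n] fm_low assms by simp
  show "x n \<le> \<rho>" using e F0_range[of "x (Suc n)"] X_D[OF assms(1), of "Suc n"] assms by simp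
  show "F0 (x n) = x (Suc n)" using e F0_invol[of "x (Suc n)"] X_D[OF assms(1), of "Suc n"] assms by simp
qed

lemma alt: assumes "x \<in> X" "\<forall>i\<le>m. x i \<le> \<rho>" shows "x m = (if even m then x 0 else F0 (x 0))"
  using assms(2)
proof (induction m)
  case 0 then show ?case by simp
next
  case (Suc m)
  have IH: "x m = (if even m then x 0 else F0 (x 0))" using Suc by simp
  have e: "x (Suc m) = F0 (x m)" using low(3)[OF assms(1), of m] Suc.prems by simp
  have "0 \<le> x 0" "x 0 \<le> \<rho>" using X_D[OF assms(1)] Suc.prems by auto
  then show ?case using IH e F0_invol[of "x 0"] by auto
qed

lemma X1_iff: assumes "x \<in> X" shows "x \<in> X1 \<longleftrightarrow> (\<exists>n. \<rho> < x n)"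
proof
  assume "x \<in> X1"
  then have lim: "x \<longlonglongrightarrow> 1" by (simp add: invlim1_def)
  show "\<exists>n. \<rho> < x n"
  proof (rule ccontr)
    assume "\<not> (\<exists>n. \<rho> < x n)"
    then have "\<forall>n. x n \<le> \<rho>" by (meson not_less)
    then have "1 \<le> \<rho>" using LIMSEQ_le_const2[OF lim] by blast
    then show False using r1 by simp
  qed
next
  assume "\<exists>n. \<rho> < x n"
  then obtain n where n: "\<rho> < x n" by blast
  have e: "x (j + n) = 1 - (1 - \<rho>) ^ j * (1 - x n)" for j
  proof (induction j)
    case 0 then show ?case by simp
  next
    case (Suc j)
    have "\<rho> < x (j + n)" using up_le[OF assms n] by simp
    then have "x (Suc (j + n)) = \<rho> + (1 - \<rho>) * x (j + n)" using up_eq[OF assms] by blast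
    then show ?case using Suc by (simp add: algebra_simps)
  qed
  have "(\<lambda>j. 1 - (1 - \<rho>) ^ j * (1 - x n)) \<longlonglongrightarrow> 1 - 0 * (1 - x n)"
    by (intro tendsto_intros LIMSEQ_power_zero) (use r0 r1 in auto)
  then have "(\<lambda>j. x (j + n)) \<longlonglongrightarrow> 1" using e by simp
  then have "x \<longlonglongrightarrow> 1" by (rule LIMSEQ_offset)
  then show "x \<in> X1" using assms by (simp add: invlim1_def)
qed

lemma notX1_low: assumes "x \<in> X" "x \<notin> X1" shows "x n \<le> \<rho>"
  using X1_iff[OF assms(1)] assms(2) by (meson not_less)

definition gr :: "real \<Rightarrow> real" where "gr s = (if s \<le> \<rho> then s - \<rho> else (s - \<rho>) / (1 - \<rho>))"

lemma gmap_Inl: "gmap \<rho> (Inl s) = Inl (gr s)" by (simp add: gmap_def gr_def)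

lemma gr_high: "\<rho> < s \<Longrightarrow> gr s = F1 s" by (simp add: gr_def f1_def)
lemma gr_low: "s \<le> \<rho> \<Longrightarrow> gr s = s - \<rho>" by (simp add: gr_def)

lemma gr_le1: "s \<le> 1 \<Longrightarrow> gr s \<le> 1" using r0 r1 by (simp add: gr_def field_simps)

lemma funpow_gr_le1: "s \<le> 1 \<Longrightarrow> (gr ^^ n) s \<le> 1"
  by (induction n) (auto intro: gr_le1)

lemma funpow_gr_low: "s \<le> \<rho> \<Longrightarrow> (gr ^^ n) s = s - real n * \<rho>"
proof (induction n)
  case 0 then show ?case by simp
next
  case (Suc n)
  have "real n * \<rho> \<ge> 0" using r0 by simp
  then have "(gr ^^ n) s \<le> \<rho>" using Suc r0 by linarith
  then show ?case using Suc by (simp add: gr_low algebra_simps)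
qed

lemma gr_strict: assumes "a < b" shows "gr a < gr b"
proof -
  consider "b \<le> \<rho>" | "a \<le> \<rho>" "\<rho> < b" | "\<rho> < a" using assms by linarith
  then show ?thesis
  proof cases
    case 1 then show ?thesis using assms by (simp add: gr_def)
  next
    case 2
    have "0 < (b - \<rho>) / (1 - \<rho>)" using 2 r1 by simp
    then show ?thesis using 2 by (simp add: gr_def)
  next
    case 3 then show ?thesis using assms r1 by (simp add: gr_def divide_strict_right_mono)
  qed
qed

lemma gr_inj: "gr a = gr b \<Longrightarrow> a = b"
  using gr_strict[of a b] gr_strict[of b a] by (cases a b rule: linorder_cases) auto

lemma funpow_gr_inj: "(gr ^^ n) a = (gr ^^ n) b \<Longrightarrow> a = b"
proof (induction n arbitrary: a b)
  case 0 then show ?case by simp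
next
  case (Suc n)
  then have "gr ((gr ^^ n) a) = gr ((gr ^^ n) b)" by simp
  then show ?case using gr_inj Suc.IH by blast
qed

lemma gr_cont: "continuous_on UNIV gr"
proof -
  have "continuous_on UNIV (\<lambda>s. if s \<le> \<rho> then s - \<rho> else (s - \<rho>) / (1 - \<rho>))"
    by (rule continuous_on_cases_le[where h="\<lambda>s. s", simplified]) (intro continuous_intros | use r1 in simp)+
  then show ?thesis unfolding gr_def .
qed

lemma funpow_gr_cont: "continuous_on UNIV (gr ^^ n)"
proof (induction n)
  case 0 then show ?case by (simp add: id_def)
next
  case (Suc n)
  then show ?case by (simp add: continuous_on_compose2[OF gr_cont Suc] o_def)
qed

definition Mx :: "(nat \<Rightarrow> real) \<Rightarrow> nat" where "Mx x = (LEAST n. \<rho> < x (Suc n))"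
definition T :: "(nat \<Rightarrow> real) \<Rightarrow> real" where "T x = (gr ^^ Mx x) (Phi (x (Mx x)))"

lemma gr_Phi: assumes "x \<in> X" "\<rho> < x (Suc n)" shows "gr (Phi (x (Suc n))) = Phi (x n)"
proof -
  have "0 \<le> x (Suc n)" "x (Suc n) \<le> 1" using X_D[OF assms(1)] by auto
  then have "gr (Phi (x (Suc n))) = F1 (Phi (x (Suc n)))" using Phi_gt assms gr_high by simp
  also have "\<dots> = Phi (F1 (x (Suc n)))" using Phi_F1 assms \<open>x (Suc n) \<le> 1\<close> by simp
  also have "F1 (x (Suc n)) = x n" using X_D[OF assms(1), of n] fm_high assms by simp
  finally show ?thesis .
qed

lemma Tform: assumes "x \<in> X" "\<rho> < x n" shows "T x = (gr ^^ n) (Phi (x n))"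
proof -
  define M where "M = Mx x"
  have sn: "\<rho> < x (Suc n)" using up[OF assms] by simp
  have M: "\<rho> < x (Suc M)" unfolding M_def Mx_def by (rule LeastI[of _ n]) (rule sn)
  have Mn: "M \<le> n" unfolding M_def Mx_def by (rule Least_le) (rule sn)
  have "(gr ^^ (M + j)) (Phi (x (M + j))) = T x" for j
  proof (induction j)
    case 0 then show ?case by (simp add: T_def M_def)
  next
    case (Suc j)
    have "\<rho> < x (Suc (M + j))" using up_le[OF assms(1) M] by simp
    then have "gr (Phi (x (Suc (M + j)))) = Phi (x (M + j))" using gr_Phi[OF assms(1)] by blast
    then show ?case using Suc by (simp add: funpow_Suc_right del: funpow.simps)
  qed
  from this[of "n - M"] show ?thesis using Mn by simp
qed

lemma X1_ex: assumes "x \<in> X1" obtains n where "\<rho> < x n"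
  using assms X1_iff by (auto simp: invlim1_def)

lemma X1_X: "x \<in> X1 \<Longrightarrow> x \<in> X" by (simp add: invlim1_def)

lemma T_le1: assumes "x \<in> X1" shows "T x \<le> 1"
proof -
  obtain n where n: "\<rho> < x n" using X1_ex[OF assms] .
  have "Phi (x n) \<le> 1" using Phi_range X_D[OF X1_X[OF assms]] by blast
  then show ?thesis using Tform[OF X1_X[OF assms] n] funpow_gr_le1 by simp
qed

abbreviation "sh \<equiv> shift fm"

lemma fm_range: assumes "0 \<le> y" "y \<le> 1" shows "0 \<le> fm y \<and> fm y \<le> 1"
proof (cases "y \<le> \<rho>")
  case True then show ?thesis using F0_range[of y] assms fm_low r1 by auto
next
  case False
  then have "fm y = (y - \<rho>) / (1 - \<rho>)" using fm_high by (simp add: f1_def)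
  moreover have "0 \<le> (y - \<rho>) / (1 - \<rho>)" using False r1 by simp
  moreover have "(y - \<rho>) / (1 - \<rho>) \<le> 1" using assms r1 by (simp add: divide_le_eq)
  ultimately show ?thesis by simp
qed

lemma sh_0: "sh x 0 = fm (x 0)" by (simp add: shift_def)
lemma sh_Suc: "sh x (Suc n) = x n" by (simp add: shift_def)

lemma sh_X: assumes "x \<in> X" shows "sh x \<in> X"
proof -
  have "0 \<le> sh x n \<and> sh x n \<le> 1" for n
    using X_D[OF assms] fm_range by (cases n) (auto simp: sh_0 sh_Suc)
  moreover have "fm (sh x (Suc n)) = sh x n" for n
    using X_D[OF assms] by (cases n) (auto simp: sh_0 sh_Suc)
  ultimately show ?thesis by (auto simp: invlim_def)
qed

lemma unsh_X: assumes "x \<in> X" shows "(\<lambda>n. x (Suc n)) \<in> X" "sh (\<lambda>n. x (Suc n)) = x"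
proof -
  show "(\<lambda>n. x (Suc n)) \<in> X" using assms by (auto simp: invlim_def)
  show "sh (\<lambda>n. x (Suc n)) = x"
  proof
    fix n show "sh (\<lambda>n. x (Suc n)) n = x n" using X_D[OF assms] by (cases n) (auto simp: sh_0 sh_Suc)
  qed
qed

lemma sh_X1: assumes "x \<in> X" shows "sh x \<in> X1 \<longleftrightarrow> x \<in> X1"
proof -
  have "(\<exists>n. \<rho> < sh x n) \<longleftrightarrow> (\<exists>n. \<rho> < x n)"
  proof
    assume "\<exists>n. \<rho> < sh x n"
    then obtain n where n: "\<rho> < sh x n" by blast
    have "\<rho> < sh x (Suc n)" using up(1)[OF sh_X[OF assms] n] .
    then show "\<exists>n. \<rho> < x n" by (auto simp: sh_Suc)
  next
    assume "\<exists>n. \<rho> < x n"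
    then obtain n where n: "\<rho> < x n" by blast
    then have "\<rho> < sh x (Suc n)" by (simp add: sh_Suc)
    then show "\<exists>n. \<rho> < sh x n" by blast
  qed
  then show ?thesis using X1_iff[OF assms] X1_iff[OF sh_X[OF assms]] by simp
qed

lemma T_sh: assumes "x \<in> X1" shows "T (sh x) = gr (T x)"
proof -
  have xX: "x \<in> X" using X1_X[OF assms] .
  obtain n where n: "\<rho> < x n" using X1_ex[OF assms] .
  have "T (sh x) = (gr ^^ Suc n) (Phi (sh x (Suc n)))"
    using Tform[OF sh_X[OF xX], of "Suc n"] n by (simp add: sh_Suc)
  also have "\<dots> = gr (T x)" using Tform[OF xX n] by (simp add: sh_Suc)
  finally show ?thesis .
qed

lemma phi_sh: assumes "x \<in> X" "x \<notin> X1" shows "phi (sh x 0) = \<rho> - phi (x 0)"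
  using notX1_low[OF assms, of 0] X_D[OF assms(1), of 0] fm_low phi_F0 by (simp add: sh_0)

lemma T_inj: assumes "x \<in> X1" "y \<in> X1" "T x = T y" shows "x = y"
proof -
  have xX: "x \<in> X" and yX: "y \<in> X" using X1_X assms by auto
  obtain n where n: "\<rho> < x n" using X1_ex[OF assms(1)] .
  obtain m where m: "\<rho> < y m" using X1_ex[OF assms(2)] .
  define N where "N = max n m"
  have xN: "\<rho> < x N" using up_le[OF xX n] by (simp add: N_def)
  have yN: "\<rho> < y N" using up_le[OF yX m] by (simp add: N_def)
  have "Phi (x N) = Phi (y N)"
    using assms(3) Tform[OF xX xN] Tform[OF yX yN] funpow_gr_inj by simp
  then have eN: "x N = y N" using Phi_inj X_D[OF xX, of N] X_D[OF yX, of N] by blast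
  have up_all: "x (N + j) = y (N + j)" for j
  proof (induction j)
    case 0 then show ?case using eN by simp
  next
    case (Suc j)
    have "\<rho> < x (N + j)" "\<rho> < y (N + j)" using up_le[OF xX xN] up_le[OF yX yN] by auto
    then show ?case using up_eq[OF xX] up_eq[OF yX] Suc by simp
  qed
  have down_all: "j \<le> N \<Longrightarrow> x (N - j) = y (N - j)" for j
  proof (induction j)
    case 0 then show ?case using eN by simp
  next
    case (Suc j)
    then have e: "x (N - j) = y (N - j)" by simp
    have "Suc (N - Suc j) = N - j" using Suc.prems by simp
    then show ?case using X_D[OF xX, of "N - Suc j"] X_D[OF yX, of "N - Suc j"] e by metis
  qed
  show ?thesis
  proof
    fix k show "x k = y k"
    proof (cases "k \<le> N")
      case True then show ?thesis using down_all[of "N - k"] by simp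
    next
      case False then show ?thesis using up_all[of "k - N"] by simp
    qed
  qed
qed

lemma T_surj_pos: assumes "0 < t" "t \<le> 1" shows "\<exists>x\<in>X1. T x = t"
proof -
  obtain z where z: "0 \<le> z" "z \<le> 1" "Phi z = t"
    using IVT'[of Phi 0 t 1] Phi_0 Phi_1 Phi_cont assms by auto
  have z0: "0 < z" using z Phi_0 assms by (cases "z = 0") auto
  define x where "x j = 1 - (1 - \<rho>) ^ j * (1 - z)" for j
  have pw: "0 \<le> (1 - \<rho>) ^ j" "(1 - \<rho>) ^ j \<le> 1" for j
    using r0 r1 by (auto simp: power_le_one)
  have xr: "0 \<le> x j \<and> x j \<le> 1" for j
  proof -
    have "(1 - \<rho>) ^ j * (1 - z) \<le> 1 * 1" by (rule mult_mono) (use pw z in auto)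
    moreover have "0 \<le> (1 - \<rho>) ^ j * (1 - z)" using pw z by simp
    ultimately show ?thesis by (simp add: x_def)
  qed
  have xs: "\<rho> < x (Suc j)" for j
  proof -
    have "(1 - \<rho>) ^ j * (1 - z) < 1 * 1"
      by (rule mult_le_less_imp_less) (use pw z0 z r0 r1 in auto)
    then have "(1 - \<rho>) * ((1 - \<rho>) ^ j * (1 - z)) < (1 - \<rho>) * 1" using r1 by simp
    then show ?thesis by (simp add: x_def algebra_simps)
  qed
  have xf: "fm (x (Suc j)) = x j" for j
  proof -
    have "fm (x (Suc j)) = F1 (x (Suc j))" using fm_high[OF xs[of j]] .
    also have "\<dots> = x j" unfolding x_def f1_def using r1 by (simp add: field_simps)
    finally show ?thesis .
  qed
  have xX: "x \<in> X" using xr xf by (auto simp: invlim_def)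
  have xX1: "x \<in> X1" using X1_iff[OF xX] xs by blast
  have "T x = (gr ^^ 1) (Phi (x 1))" using Tform[OF xX xs[of 0]] by simp
  also have "\<dots> = Phi (x 0)" using gr_Phi[OF xX xs[of 0]] by simp
  also have "\<dots> = t" using z by (simp add: x_def)
  finally show ?thesis using xX1 by blast
qed

lemma T_surj: assumes "t \<le> 1" shows "\<exists>x\<in>X1. T x = t"
proof (cases "0 < t")
  case True then show ?thesis using T_surj_pos assms by blast
next
  case False
  define k where "k = nat \<lfloor>- t / \<rho>\<rfloor> + 1"
  have "0 \<le> - t / \<rho>" using False r0 by (intro divide_nonneg_pos) auto
  then have fl0: "0 \<le> \<lfloor>- t / \<rho>\<rfloor>" by simp
  have rk: "real k = of_int \<lfloor>- t / \<rho>\<rfloor> + 1" using fl0 by (simp add: k_def)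
  have a1: "- t / \<rho> < real k" using rk by linarith
  have a2: "real k - 1 \<le> - t / \<rho>" using rk by linarith
  define s where "s = t + real k * \<rho>"
  have s0: "0 < s" using a1 r0 by (simp add: s_def field_simps)
  have s1: "s \<le> \<rho>" using a2 r0 by (simp add: s_def field_simps)
  have P: "\<exists>x\<in>X1. T x = (gr ^^ j) s" for j
  proof (induction j)
    case 0 then show ?case using T_surj_pos[of s] s0 s1 r1 by simp
  next
    case (Suc j)
    then obtain x where x: "x \<in> X1" "T x = (gr ^^ j) s" by blast
    have "sh x \<in> X1" using sh_X1 X1_X x by blast
    moreover have "T (sh x) = (gr ^^ Suc j) s" using T_sh[OF x(1)] x by simp
    ultimately show ?case by blast
  qed
  have "(gr ^^ k) s = t" using funpow_gr_low[OF s1] by (simp add: s_def)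
  then show ?thesis using P[of k] by simp
qed

definition h :: "(nat \<Rightarrow> real) \<Rightarrow> real + real" where
  "h x = (if x \<in> X1 then Inl (T x) else Inr (phi (x 0)))"

lemma h_conj: assumes "x \<in> X" shows "h (sh x) = gmap \<rho> (h x)"
proof (cases "x \<in> X1")
  case True
  then show ?thesis using sh_X1[OF assms] T_sh by (simp add: h_def gmap_Inl)
next
  case False
  then show ?thesis using sh_X1[OF assms] phi_sh[OF assms] by (simp add: h_def gmap_def)
qed

lemma phi_inj: "0 \<le> a \<Longrightarrow> a \<le> \<rho> \<Longrightarrow> 0 \<le> c \<Longrightarrow> c \<le> \<rho> \<Longrightarrow> phi a = phi c \<Longrightarrow> a = c"
  using phi_strict[of a c] phi_strict[of c a] by (cases a c rule: linorder_cases) auto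

lemma notX1_eq: assumes "x \<in> X" "x \<notin> X1" shows "x n = (if even n then x 0 else F0 (x 0))"
  using alt[OF assms(1)] notX1_low[OF assms] by blast

lemma h_X1: "h ` X1 = Inl ` {..1}"
proof
  show "h ` X1 \<subseteq> Inl ` {..1}" using T_le1 by (auto simp: h_def)
  show "Inl ` {..1} \<subseteq> h ` X1"
  proof
    fix p :: "real + real" assume "p \<in> Inl ` {..1}"
    then obtain t where t: "t \<le> 1" "p = Inl t" by auto
    then obtain x where "x \<in> X1" "T x = t" using T_surj by blast
    then show "p \<in> h ` X1" using t by (auto simp: h_def intro!: image_eqI[of _ _ x])
  qed
qed

lemma h_notX1: "h ` (X - X1) = Inr ` {0..\<rho>}"
proof
  show "h ` (X - X1) \<subseteq> Inr ` {0..\<rho>}"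
  proof
    fix p assume "p \<in> h ` (X - X1)"
    then obtain x where x: "x \<in> X" "x \<notin> X1" "p = h x" by blast
    have "0 \<le> x 0" using X_D[OF x(1)] by blast
    then have "phi (x 0) \<in> {0..\<rho>}" using phi_range notX1_low[OF x(1,2)] by simp
    then show "p \<in> Inr ` {0..\<rho>}" using x by (simp add: h_def)
  qed
  show "Inr ` {0..\<rho>} \<subseteq> h ` (X - X1)"
  proof
    fix p :: "real + real" assume "p \<in> Inr ` {0..\<rho>}"
    then obtain u where u: "0 \<le> u" "u \<le> \<rho>" "p = Inr u" by auto
    obtain a where a: "0 \<le> a" "a \<le> \<rho>" "phi a = u"
      using IVT'[of phi 0 u \<rho>] phi_0 phi_rho phi_cont u r0 by auto
    define x where "x n = (if even n then a else F0 a)" for n :: nat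
    have xr: "0 \<le> x n \<and> x n \<le> \<rho>" for n using F0_range[OF a(1,2)] a by (simp add: x_def)
    have "fm (x (Suc n)) = x n" for n
      using xr[of "Suc n"] fm_low F0_invol[OF a(1,2)] by (simp add: x_def)
    moreover have "0 \<le> x n \<and> x n \<le> 1" for n using xr[of n] r1 by simp
    ultimately have xX: "x \<in> X" by (simp add: invlim_def)
    have xn: "x \<notin> X1" using X1_iff[OF xX] xr by (meson not_less)
    have "h x = p" using xn a u by (simp add: h_def x_def)
    then show "p \<in> h ` (X - X1)" using xX xn by blast
  qed
qed

lemma h_inj: "inj_on h X"
proof (rule inj_onI)
  fix x y assume x: "x \<in> X" and y: "y \<in> X" and e: "h x = h y"
  show "x = y"
  proof (cases "x \<in> X1")
    case True
    have "y \<in> X1"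
    proof (rule ccontr)
      assume "y \<notin> X1" then show False using e True by (simp add: h_def)
    qed
    then show ?thesis using True e T_inj by (simp add: h_def)
  next
    case False
    have yn: "y \<notin> X1"
    proof
      assume "y \<in> X1" then show False using e False by (simp add: h_def)
    qed
    have "phi (x 0) = phi (y 0)" using e False yn by (simp add: h_def)
    moreover have "0 \<le> x 0" "0 \<le> y 0" using X_D[OF x, of 0] X_D[OF y, of 0] by auto
    ultimately have "x 0 = y 0" using phi_inj notX1_low[OF x False, of 0] notX1_low[OF y yn, of 0] by blast
    show ?thesis
    proof
      fix n show "x n = y n"
        using notX1_eq[OF x False, of n] notX1_eq[OF y yn, of n] \<open>x 0 = y 0\<close> by (cases "even n") simp_all
    qed
  qed
qed

lemma h_img: "h ` X = Ycarrier \<rho>"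
proof -
  have "X = X1 \<union> (X - X1)" using X1_X by auto
  then have "h ` X = h ` X1 \<union> h ` (X - X1)" by (metis image_Un)
  then show ?thesis using h_X1 h_notX1 by (simp add: Ycarrier_def)
qed

definition cc :: "nat \<Rightarrow> real \<Rightarrow> real" where
  "cc n x = (-1)^n * x - 2 * of_int \<lfloor>real n / 2\<rfloor> * \<rho>"

definition BL :: "real \<Rightarrow> real \<Rightarrow> (real + real) set" where
  "BL x e = Inl ` ({x - e <..< x + e} \<inter> {..1})"

definition BR :: "real \<Rightarrow> real \<Rightarrow> nat \<Rightarrow> (real + real) set" where
  "BR x e N = Inr ` {y \<in> {0..\<rho>}. \<bar>y - x\<bar> < e}
              \<union> Inl ` (\<Union>n\<in>{n::nat. n > N}. {cc n x - e <..< cc n x + e} \<inter> {..1})"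

lemma Ybasic_Inl: "Ybasic \<rho> (Inl x) = {BL x e | e. e > 0}"
  by (simp add: Ybasic_def BL_def)

lemma Ybasic_Inr: "Ybasic \<rho> (Inr x) = {BR x e N | e N. e > 0}"
  by (simp add: Ybasic_def BR_def cc_def)

lemma cc_eq: "cc n x = (-1)^n * x - 2 * real (n div 2) * \<rho>"
proof -
  have "\<lfloor>real n / 2\<rfloor> = int (n div 2)"
    using floor_divide_of_nat_eq[of n 2] by simp
  then show ?thesis by (simp add: cc_def)
qed

lemma BL_mono: "e \<le> e' \<Longrightarrow> BL x e \<subseteq> BL x e'"
  by (auto simp: BL_def)

lemma BR_mono: assumes "e \<le> e'" "N' \<le> N" shows "BR x e N \<subseteq> BR x e' N'"
proof
  fix q assume q: "q \<in> BR x e N"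
  show "q \<in> BR x e' N'"
  proof (cases q)
    case (Inl w)
    then obtain n where n: "n > N" "w \<in> {cc n x - e <..< cc n x + e} \<inter> {..1}" using q by (auto simp: BR_def)
    then have "n > N'" "w \<in> {cc n x - e' <..< cc n x + e'} \<inter> {..1}" using assms by auto
    then have "w \<in> (\<Union>n\<in>{n::nat. n > N'}. {cc n x - e' <..< cc n x + e'} \<inter> {..1})"
      by (intro UN_I[of n]) auto
    then show ?thesis using Inl by (simp add: BR_def)
  next
    case (Inr v)
    then show ?thesis using q assms by (auto simp: BR_def)
  qed
qed

definition YP :: "(real + real) set \<Rightarrow> bool" where
  "YP U \<longleftrightarrow> U \<subseteq> Ycarrier \<rho> \<and> (\<forall>p\<in>U. \<exists>B\<in>Ybasic \<rho> p. B \<subseteq> U)"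

lemma YP_Int: assumes S: "YP S" and U2: "YP U2" shows "YP (S \<inter> U2)"
  unfolding YP_def
proof (intro conjI ballI)
  show "S \<inter> U2 \<subseteq> Ycarrier \<rho>" using S by (auto simp: YP_def)
  fix p assume p: "p \<in> S \<inter> U2"
  obtain B1 where B1: "B1 \<in> Ybasic \<rho> p" "B1 \<subseteq> S" using S p by (auto simp: YP_def)
  obtain B2 where B2: "B2 \<in> Ybasic \<rho> p" "B2 \<subseteq> U2" using U2 p by (auto simp: YP_def)
  show "\<exists>B\<in>Ybasic \<rho> p. B \<subseteq> S \<inter> U2"
  proof (cases p)
    case (Inl x)
    obtain e1 where e1: "e1 > 0" "B1 = BL x e1" using B1 Inl by (auto simp: Ybasic_Inl)
    obtain e2 where e2: "e2 > 0" "B2 = BL x e2" using B2 Inl by (auto simp: Ybasic_Inl)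
    have "BL x (min e1 e2) \<in> Ybasic \<rho> p" using e1 e2 Inl by (auto simp: Ybasic_Inl)
    moreover have "BL x (min e1 e2) \<subseteq> S \<inter> U2"
      using BL_mono[of "min e1 e2" e1 x] BL_mono[of "min e1 e2" e2 x] e1 e2 B1 B2 by auto
    ultimately show ?thesis by blast
  next
    case (Inr x)
    obtain e1 N1 where e1: "e1 > 0" "B1 = BR x e1 N1" using B1 Inr by (auto simp: Ybasic_Inr)
    obtain e2 N2 where e2: "e2 > 0" "B2 = BR x e2 N2" using B2 Inr by (auto simp: Ybasic_Inr)
    have "BR x (min e1 e2) (max N1 N2) \<in> Ybasic \<rho> p" using e1 e2 Inr by (auto simp: Ybasic_Inr)
    moreover have "BR x (min e1 e2) (max N1 N2) \<subseteq> S \<inter> U2"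
      using BR_mono[of "min e1 e2" e1 N1 "max N1 N2" x] BR_mono[of "min e1 e2" e2 N2 "max N1 N2" x] e1 e2 B1 B2 by auto
    ultimately show ?thesis by blast
  qed
qed

lemma YP_Union: assumes K: "\<forall>U\<in>K. YP U" shows "YP (\<Union>K)"
  unfolding YP_def
proof (intro conjI ballI)
  show "\<Union>K \<subseteq> Ycarrier \<rho>" using K by (auto simp: YP_def)
  fix p assume "p \<in> \<Union>K"
  then obtain U where "U \<in> K" "p \<in> U" by blast
  then obtain B where "B \<in> Ybasic \<rho> p" "B \<subseteq> U" using K unfolding YP_def by meson
  then show "\<exists>B\<in>Ybasic \<rho> p. B \<subseteq> \<Union>K" using \<open>U \<in> K\<close> by blast
qed

lemma Yistop: "istopology YP"
  unfolding istopology_def using YP_Int YP_Union by blast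

lemma Ytop_eq: "Ytop \<rho> = topology YP"
  unfolding Ytop_def YP_def[abs_def] ..

lemma Yopen: "openin (Ytop \<rho>) U \<longleftrightarrow> U \<subseteq> Ycarrier \<rho> \<and> (\<forall>p\<in>U. \<exists>B\<in>Ybasic \<rho> p. B \<subseteq> U)"
  unfolding Ytop_eq using Yistop by (simp add: YP_def)

lemma BL_open: "openin (Ytop \<rho>) (BL x e)"
  unfolding Yopen
proof (intro conjI ballI)
  show "BL x e \<subseteq> Ycarrier \<rho>" by (auto simp: BL_def Ycarrier_def)
  fix p assume "p \<in> BL x e"
  then obtain y where y: "p = Inl y" "x - e < y" "y < x + e" "y \<le> 1" by (auto simp: BL_def)
  define e' where "e' = min (y - (x - e)) (x + e - y)"
  have "BL y e' \<in> Ybasic \<rho> p" using y by (auto simp: Ybasic_Inl e'_def)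
  moreover have "BL y e' \<subseteq> BL x e"
  proof
    fix q assume "q \<in> BL y e'"
    then obtain w where w: "q = Inl w" "y - e' < w" "w < y + e'" "w \<le> 1" by (auto simp: BL_def)
    moreover have "e' \<le> y - (x - e)" "e' \<le> x + e - y" unfolding e'_def by auto
    ultimately have "x - e < w" "w < x + e" by linarith+
    then show "q \<in> BL x e" using w by (auto simp: BL_def)
  qed
  ultimately show "\<exists>B\<in>Ybasic \<rho> p. B \<subseteq> BL x e" by blast
qed

lemma cc_diff: "\<bar>cc n y - cc n x\<bar> = \<bar>y - x\<bar>"
proof -
  have "cc n y - cc n x = (-1)^n * (y - x)" by (simp add: cc_def algebra_simps)
  then show ?thesis by (simp add: abs_mult)
qed

lemma BR_open: "openin (Ytop \<rho>) (BR x e N)"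
  unfolding Yopen
proof (intro conjI ballI)
  show "BR x e N \<subseteq> Ycarrier \<rho>" by (auto simp: BR_def Ycarrier_def)
  fix p assume p: "p \<in> BR x e N"
  show "\<exists>B\<in>Ybasic \<rho> p. B \<subseteq> BR x e N"
  proof (cases p)
    case (Inl z)
    then obtain n where n: "n > N" "cc n x - e < z" "z < cc n x + e" "z \<le> 1" using p by (auto simp: BR_def)
    define e' where "e' = min (z - (cc n x - e)) (cc n x + e - z)"
    have "BL z e' \<in> Ybasic \<rho> p" using n Inl by (auto simp: Ybasic_Inl e'_def)
    moreover have "BL z e' \<subseteq> BR x e N"
    proof
      fix q assume "q \<in> BL z e'"
      then obtain w where w: "q = Inl w" "z - e' < w" "w < z + e'" "w \<le> 1" by (auto simp: BL_def)
      moreover have "e' \<le> z - (cc n x - e)" "e' \<le> cc n x + e - z" unfolding e'_def by auto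
      ultimately have "cc n x - e < w" "w < cc n x + e" by linarith+
      then have "w \<in> (\<Union>n\<in>{n::nat. n > N}. {cc n x - e <..< cc n x + e} \<inter> {..1})"
        using w n by (intro UN_I[of n]) auto
      then show "q \<in> BR x e N" using w by (simp add: BR_def)
    qed
    ultimately show ?thesis by blast
  next
    case (Inr y)
    then have y: "0 \<le> y" "y \<le> \<rho>" "\<bar>y - x\<bar> < e" using p by (auto simp: BR_def)
    define e' where "e' = e - \<bar>y - x\<bar>"
    have "BR y e' N \<in> Ybasic \<rho> p" using y Inr by (auto simp: Ybasic_Inr e'_def)
    moreover have "BR y e' N \<subseteq> BR x e N"
    proof
      fix q assume q: "q \<in> BR y e' N"
      show "q \<in> BR x e N"
      proof (cases q)
        case (Inl w)
        then obtain n where n: "n > N" "cc n y - e' < w" "w < cc n y + e'" "w \<le> 1" using q by (auto simp: BR_def)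
        have "\<bar>cc n y - cc n x\<bar> = \<bar>y - x\<bar>" by (rule cc_diff)
        then have "cc n x - e < w" "w < cc n x + e" using n unfolding e'_def by linarith+
        then have "w \<in> (\<Union>n\<in>{n::nat. n > N}. {cc n x - e <..< cc n x + e} \<inter> {..1})"
          using n by (intro UN_I[of n]) auto
        then show ?thesis using Inl by (simp add: BR_def)
      next
        case (Inr v)
        then have "0 \<le> v" "v \<le> \<rho>" "\<bar>v - y\<bar> < e'" using q by (auto simp: BR_def)
        then have "\<bar>v - x\<bar> < e" by (auto simp: e'_def)
        then show ?thesis using Inr \<open>0 \<le> v\<close> \<open>v \<le> \<rho>\<close> by (auto simp: BR_def)
      qed
    qed
    ultimately show ?thesis by blast
  qed
qed

lemma Ycarrier_open: "openin (Ytop \<rho>) (Ycarrier \<rho>)"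
  unfolding Yopen
proof (intro conjI ballI)
  fix p assume p: "p \<in> Ycarrier \<rho>"
  show "\<exists>B\<in>Ybasic \<rho> p. B \<subseteq> Ycarrier \<rho>"
  proof (cases p)
    case (Inl x)
    have "BL x 1 \<in> Ybasic \<rho> p" using Inl by (auto simp: Ybasic_Inl)
    moreover have "BL x 1 \<subseteq> Ycarrier \<rho>" by (auto simp: BL_def Ycarrier_def)
    ultimately show ?thesis by blast
  next
    case (Inr x)
    have "BR x 1 0 \<in> Ybasic \<rho> p" using Inr by (auto simp: Ybasic_Inr)
    moreover have "BR x 1 0 \<subseteq> Ycarrier \<rho>" by (auto simp: BR_def Ycarrier_def)
    ultimately show ?thesis by blast
  qed
qed simp

lemma Ytopspace: "topspace (Ytop \<rho>) = Ycarrier \<rho>"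
proof
  show "topspace (Ytop \<rho>) \<subseteq> Ycarrier \<rho>" unfolding topspace_def using Yopen by blast
  show "Ycarrier \<rho> \<subseteq> topspace (Ytop \<rho>)" using Ycarrier_open openin_subset by blast
qed

lemma cc_bound: assumes "0 \<le> x" "x \<le> \<rho>" shows "cc n x \<le> (2 - real n) * \<rho>"
proof -
  have "(-1)^n * x \<le> x" using assms by (cases "even n") auto
  moreover have "real n - 1 \<le> 2 * real (n div 2)"
  proof -
    have "n = 2 * (n div 2) + n mod 2" by simp
    moreover have "n mod 2 \<le> 1" by simp
    ultimately have "n \<le> 2 * (n div 2) + 1" by linarith
    then have "real n \<le> real (2 * (n div 2) + 1)" by (simp only: of_nat_le_iff)
    then show ?thesis by simp
  qed
  then have "(real n - 1) * \<rho> \<le> 2 * real (n div 2) * \<rho>" using r0 by (simp add: mult_right_mono)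
  ultimately show ?thesis using assms unfolding cc_eq by (simp add: algebra_simps)
qed

lemma sep_J:
  fixes x y s s' J :: real
  assumes "0 \<le> x" "x \<le> \<rho>" "0 \<le> y" "y \<le> \<rho>" "s = 1 \<or> s = -1" "s' = 1 \<or> s' = -1"
    and "\<rho> \<le> J \<or> J \<le> - \<rho> \<or> J = 0"
  shows "min (min \<rho> (2 * \<rho> - x - y)) (min \<bar>x - y\<bar> (x + y)) \<le> \<bar>s * x - s' * y + 2 * J\<bar>"
  using assms r0 by (auto simp: abs_if min_def)

lemma sep_core:
  fixes x y s s' :: real and j :: int
  assumes "0 \<le> x" "x \<le> \<rho>" "0 \<le> y" "y \<le> \<rho>" "s = 1 \<or> s = -1" "s' = 1 \<or> s' = -1"
  shows "min (min \<rho> (2 * \<rho> - x - y)) (min \<bar>x - y\<bar> (x + y)) \<le> \<bar>s * x - s' * y + 2 * of_int j * \<rho>\<bar>"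
proof -
  have J: "\<rho> \<le> of_int j * \<rho> \<or> of_int j * \<rho> \<le> - \<rho> \<or> of_int j * \<rho> = 0"
  proof -
    consider "j \<ge> 1" | "j \<le> -1" | "j = 0" by linarith
    then show ?thesis
    proof cases
      case 1
      then have "of_int j * \<rho> \<ge> 1 * \<rho>" using r0 by (intro mult_right_mono) auto
      then show ?thesis by simp
    next
      case 2
      then have "of_int j * \<rho> \<le> (-1) * \<rho>" using r0 by (intro mult_right_mono) auto
      then show ?thesis by simp
    qed simp
  qed
  have "2 * of_int j * \<rho> = 2 * (of_int j * \<rho>)" by simp
  then show ?thesis using sep_J[OF assms J] by (simp add: mult.assoc)
qed

definition dd :: "real \<Rightarrow> real \<Rightarrow> real" where
  "dd x y = min (min \<rho> (2 * \<rho> - x - y)) (min \<bar>x - y\<bar> (x + y))"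

lemma dd_pos: assumes "0 \<le> x" "x \<le> \<rho>" "0 \<le> y" "y \<le> \<rho>" "x \<noteq> y" shows "0 < dd x y"
  using assms r0 by (auto simp: dd_def)

lemma cc_sep: assumes "0 \<le> x" "x \<le> \<rho>" "0 \<le> y" "y \<le> \<rho>" shows "dd x y \<le> \<bar>cc n x - cc m y\<bar>"
proof -
  have e: "cc n x - cc m y = (-1)^n * x - (-1)^m * y + 2 * of_int (int (m div 2) - int (n div 2)) * \<rho>"
    unfolding cc_eq by (simp add: algebra_simps)
  have s: "((-1::real)^n = 1 \<or> (-1::real)^n = -1)" "((-1::real)^m = 1 \<or> (-1::real)^m = -1)"
    by (cases "even n"; simp) (cases "even m"; simp)
  show ?thesis unfolding e dd_def by (rule sep_core[OF assms s])
qed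

lemma sepLR: assumes "a \<le> 1" "0 \<le> x" "x \<le> \<rho>"
  shows "\<exists>U V. openin (Ytop \<rho>) U \<and> openin (Ytop \<rho>) V \<and> Inl a \<in> U \<and> Inr x \<in> V \<and> disjnt U V"
proof -
  define N where "N = nat \<lceil>(3 - a) / \<rho>\<rceil> + 2"
  have key: "cc n x + 1 < a - 1" if "n > N" for n
  proof -
    have "real n \<ge> real N + 1" using that by simp
    moreover have "real N \<ge> (3 - a) / \<rho> + 2" unfolding N_def by linarith
    ultimately have "real n \<ge> (3 - a) / \<rho> + 3" by linarith
    then have "(2 - real n) * \<rho> \<le> (2 - ((3 - a) / \<rho> + 3)) * \<rho>" using r0 by (intro mult_right_mono) auto
    also have "\<dots> = - \<rho> - (3 - a)" using r0 by (simp add: field_simps)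
    finally show ?thesis using cc_bound[OF assms(2,3), of n] r0 by linarith
  qed
  have "disjnt (BL a 1) (BR x 1 N)"
    unfolding disjnt_def
  proof (rule equals0I)
    fix q assume q: "q \<in> BL a 1 \<inter> BR x 1 N"
    then obtain w where w: "q = Inl w" "a - 1 < w" by (auto simp: BL_def)
    then obtain n where "n > N" "w < cc n x + 1" using q by (auto simp: BR_def)
    then show False using key w by force
  qed
  moreover have "Inl a \<in> BL a 1" using assms by (auto simp: BL_def)
  moreover have "Inr x \<in> BR x 1 N" using assms by (auto simp: BR_def)
  ultimately show ?thesis using BL_open[of a 1] BR_open[of x 1 N] by (intro exI[of _ "BL a 1"] exI[of _ "BR x 1 N"]) simp
qed

lemma Y_Hausdorff: "Hausdorff_space (Ytop \<rho>)"
  unfolding Hausdorff_space_def Ytopspace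
proof (intro allI impI)
  fix p q assume pq: "p \<in> Ycarrier \<rho> \<and> q \<in> Ycarrier \<rho> \<and> p \<noteq> q"
  show "\<exists>U V. openin (Ytop \<rho>) U \<and> openin (Ytop \<rho>) V \<and> p \<in> U \<and> q \<in> V \<and> disjnt U V"
  proof (cases p)
    case (Inl a)
    then have a: "a \<le> 1" using pq by (auto simp: Ycarrier_def)
    show ?thesis
    proof (cases q)
      case (Inl b)
      then have b: "b \<le> 1" using pq by (auto simp: Ycarrier_def)
      have ab: "a \<noteq> b" using pq \<open>p = Inl a\<close> Inl by auto
      define e where "e = \<bar>a - b\<bar> / 2"
      have e0: "e > 0" using ab by (simp add: e_def)
      have "disjnt (BL a e) (BL b e)"
        unfolding disjnt_def
      proof (rule equals0I)
        fix r assume "r \<in> BL a e \<inter> BL b e"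
        then obtain w where "a - e < w" "w < a + e" "b - e < w" "w < b + e" by (auto simp: BL_def)
        then have "\<bar>a - b\<bar> < 2 * e" by (simp add: abs_less_iff)
        then show False by (simp add: e_def)
      qed
      moreover have "p \<in> BL a e" "q \<in> BL b e" using \<open>p = Inl a\<close> Inl a b e0 by (auto simp: BL_def)
      ultimately show ?thesis using BL_open[of a e] BL_open[of b e] by (intro exI[of _ "BL a e"] exI[of _ "BL b e"]) simp
    next
      case (Inr x)
      then have x: "0 \<le> x" "x \<le> \<rho>" using pq by (auto simp: Ycarrier_def)
      show ?thesis using sepLR[OF a x] unfolding \<open>p = Inl a\<close> Inr .
    qed
  next
    case (Inr x)
    then have x: "0 \<le> x" "x \<le> \<rho>" using pq by (auto simp: Ycarrier_def)
    show ?thesis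
    proof (cases q)
      case (Inl a)
      then have a: "a \<le> 1" using pq by (auto simp: Ycarrier_def)
      obtain U V where "openin (Ytop \<rho>) U" "openin (Ytop \<rho>) V" "Inl a \<in> U" "Inr x \<in> V" "disjnt U V"
        using sepLR[OF a x] by blast
      then show ?thesis using \<open>p = Inr x\<close> Inl disjnt_sym by metis
    next
      case (Inr y)
      then have y: "0 \<le> y" "y \<le> \<rho>" using pq by (auto simp: Ycarrier_def)
      have xy: "x \<noteq> y" using pq \<open>p = Inr x\<close> Inr by auto
      define e where "e = dd x y / 2"
      have e0: "e > 0" using dd_pos[OF x y xy] by (simp add: e_def)
      have "disjnt (BR x e 0) (BR y e 0)"
        unfolding disjnt_def
      proof (rule equals0I)
        fix r assume r: "r \<in> BR x e 0 \<inter> BR y e 0"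
        show False
        proof (cases r)
          case (Inl w)
          then obtain n m where "cc n x - e < w" "w < cc n x + e" "cc m y - e < w" "w < cc m y + e"
            using r by (auto simp: BR_def)
          then have "\<bar>cc n x - cc m y\<bar> < dd x y" by (auto simp: e_def abs_if)
          then show False using cc_sep[OF x y, of n m] by linarith
        next
          case (Inr z)
          then have "\<bar>z - x\<bar> < e" "\<bar>z - y\<bar> < e" using r by (auto simp: BR_def)
          then have "\<bar>x - y\<bar> < 2 * e" by (auto simp: abs_less_iff)
          then have "\<bar>x - y\<bar> < dd x y" by (simp add: e_def)
          moreover have "dd x y \<le> \<bar>x - y\<bar>" by (simp add: dd_def)
          ultimately show False by linarith
        qed
      qed
      moreover have "p \<in> BR x e 0" "q \<in> BR y e 0" using \<open>p = Inr x\<close> Inr x y e0 by (auto simp: BR_def)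
      ultimately show ?thesis using BR_open[of x e 0] BR_open[of y e 0] by (intro exI[of _ "BR x e 0"] exI[of _ "BR y e 0"]) simp
    qed
  qed
qed

abbreviation "PP \<equiv> powertop_real (UNIV :: nat set)"

lemma topspace_PP: "topspace PP = UNIV" by simp

lemma topspace_XT: "topspace (invlim_top fm) = X"
  by (simp add: invlim_top_def)

lemma fm_cont: "continuous_on {0..1} fm"
proof -
  have "continuous_on {0..1} (\<lambda>t. if t \<le> \<rho> then F0 t else F1 t)"
  proof (rule continuous_on_cases_le[where h="\<lambda>t. t" and a=\<rho>])
    show "continuous_on {t \<in> {0..1}. t \<le> \<rho>} F0"
      by (rule continuous_on_subset[OF F0_cont]) auto
    show "continuous_on {t \<in> {0..1}. \<rho> \<le> t} F1" by (rule F1_cont)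
    show "continuous_on {0..1} (\<lambda>t. t)" by (rule continuous_on_id)
    show "\<And>t. t \<in> {0..1} \<Longrightarrow> t = \<rho> \<Longrightarrow> F0 t = F1 t" using F0_rho by (simp add: f1_def)
  qed
  then show ?thesis by (simp add: fmap_def[abs_def])
qed

definition Box :: "(nat \<Rightarrow> real) set" where "Box = {x. \<forall>n. x n \<in> {0..1}}"

lemma Box_PiE: "Box = PiE UNIV (\<lambda>_. {0..1})"
  by (auto simp: Box_def PiE_def extensional_def)

lemma proj_cont: "continuous_map (subtopology PP S) euclideanreal (\<lambda>x. x n)"
  by (intro continuous_map_from_subtopology continuous_map_product_projection) simp

lemma proj_fm_cont: "continuous_map (subtopology PP Box) euclideanreal (\<lambda>x. fm (x n))"
proof -
  have a: "continuous_map (subtopology PP Box) (top_of_set {0..1}) (\<lambda>x. x n)"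
    by (rule continuous_map_into_subtopology[OF proj_cont]) (auto simp: Box_def)
  have b: "continuous_map (top_of_set {0..1}) euclideanreal fm" using fm_cont by simp
  have "continuous_map (subtopology PP Box) euclideanreal (fm \<circ> (\<lambda>x. x n))"
    by (rule continuous_map_compose[OF a b])
  then show ?thesis by (simp add: o_def)
qed

lemma X_compact: "compact_space (invlim_top fm)"
proof -
  have cB: "compactin PP Box" unfolding Box_PiE by (simp add: compactin_PiE)
  then have csB: "compact_space (subtopology PP Box)" by (rule compact_space_subtopology)
  have eq: "X = (\<Inter>n\<in>UNIV. {x \<in> topspace (subtopology PP Box). fm (x (Suc n)) = x n})"
    by (auto simp: invlim_def Box_def)
  have cl: "closedin (subtopology PP Box) {x \<in> topspace (subtopology PP Box). fm (x (Suc n)) = x n}" for n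
    by (rule closedin_continuous_maps_eq[OF Hausdorff_space_euclidean proj_fm_cont proj_cont])
  have "closedin (subtopology PP Box) X"
    unfolding eq by (rule closedin_INT) (use cl in auto)
  then have "compactin (subtopology PP Box) X" by (rule closedin_compact_space[OF csB])
  then have "compactin PP X" by (simp add: compactin_subtopology)
  then show ?thesis unfolding invlim_top_def by (rule compact_space_subtopology)
qed

lemma XT_Hausdorff: "Hausdorff_space (invlim_top fm)"
  unfolding invlim_top_def
  by (intro Hausdorff_space_subtopology) (simp add: Hausdorff_space_product_topology)

definition cyl :: "(nat \<Rightarrow> real) \<Rightarrow> nat \<Rightarrow> real \<Rightarrow> (nat \<Rightarrow> real) set" where
  "cyl x K e = {y. \<forall>i\<le>K. \<bar>y i - x i\<bar> < e}"

lemma cyl_open: "openin PP (cyl x K e)"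
proof -
  have o: "openin PP {y \<in> topspace PP. y i \<in> {x i - e <..< x i + e}}" for i
    by (rule openin_continuous_map_preimage) (auto intro: continuous_map_product_projection)
  have "openin PP ((\<Inter>i\<in>{..K}. {y \<in> topspace PP. y i \<in> {x i - e <..< x i + e}}) \<inter> topspace PP)"
    by (rule openin_INT) (use o in auto)
  moreover have "(\<Inter>i\<in>{..K}. {y \<in> topspace PP. y i \<in> {x i - e <..< x i + e}}) \<inter> topspace PP = cyl x K e"
    by (force simp: cyl_def abs_less_iff)
  ultimately show ?thesis by simp
qed

lemma cyl_mem: "e > 0 \<Longrightarrow> x \<in> cyl x K e" by (simp add: cyl_def)

lemma sh_cont: "continuous_map (invlim_top fm) (invlim_top fm) sh"
proof -
  have c: "continuous_map (invlim_top fm) euclideanreal (\<lambda>x. sh x k)" for k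
  proof (cases k)
    case 0
    have "continuous_map (subtopology PP Box) euclideanreal (\<lambda>x. fm (x 0))" by (rule proj_fm_cont)
    then have "continuous_map (subtopology (subtopology PP Box) X) euclideanreal (\<lambda>x. fm (x 0))"
      by (rule continuous_map_from_subtopology)
    moreover have "subtopology (subtopology PP Box) X = invlim_top fm"
    proof -
      have "Box \<inter> X = X" by (auto simp: Box_def invlim_def)
      then show ?thesis by (simp add: subtopology_subtopology invlim_top_def)
    qed
    ultimately show ?thesis using 0 by (simp add: sh_0)
  next
    case (Suc m)
    then show ?thesis using proj_cont[of X m] by (simp add: sh_Suc invlim_top_def)
  qed
  have "continuous_map (invlim_top fm) PP sh"
    using c by (simp add: continuous_map_componentwise_UNIV)
  moreover have "sh \<in> topspace (invlim_top fm) \<rightarrow> X" using sh_X by (simp add: topspace_XT)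
  ultimately show ?thesis unfolding invlim_top_def
    by (simp add: continuous_map_in_subtopology)
qed

lemma sh_homeo: "homeomorphic_map (invlim_top fm) (invlim_top fm) sh"
proof (rule continuous_imp_homeomorphic_map[OF sh_cont X_compact XT_Hausdorff])
  show "sh ` topspace (invlim_top fm) = topspace (invlim_top fm)"
    unfolding topspace_XT
  proof
    show "sh ` X \<subseteq> X" using sh_X by auto
    show "X \<subseteq> sh ` X"
    proof
      fix x assume x: "x \<in> X"
      then show "x \<in> sh ` X" using unsh_X[OF x] by (metis imageI)
    qed
  qed
  show "inj_on sh (topspace (invlim_top fm))"
  proof (rule inj_onI)
    fix x y assume "sh x = sh y"
    then have "sh x (Suc n) = sh y (Suc n)" for n by simp
    then show "x = y" by (simp add: sh_Suc fun_eq_iff)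
  qed
qed

lemma GPhi_cont: "continuous_on {0..1} ((gr ^^ n) \<circ> Phi)"
  by (rule continuous_on_compose[OF Phi_cont continuous_on_subset[OF funpow_gr_cont]]) simp

lemma hloc_X1: assumes x: "x \<in> X1" and e: "e > 0"
  shows "\<exists>W. openin PP W \<and> x \<in> W \<and> (\<forall>y\<in>X \<inter> W. h y \<in> BL (T x) e)"
proof -
  have xX: "x \<in> X" using X1_X[OF x] .
  obtain n where n: "\<rho> < x n" using X1_ex[OF x] .
  have xn: "x n \<in> {0..1}" using X_D[OF xX, of n] by simp
  obtain d where d: "d > 0" "\<forall>z\<in>{0..1}. dist z (x n) < d \<longrightarrow> dist (((gr ^^ n) \<circ> Phi) z) (((gr ^^ n) \<circ> Phi) (x n)) < e"
    using GPhi_cont[of n] xn e unfolding continuous_on_iff by blast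
  define W where "W = cyl x n (min d (x n - \<rho>))"
  have "openin PP W" by (simp add: W_def cyl_open)
  moreover have "x \<in> W" using d n by (simp add: W_def cyl_mem)
  moreover have "h y \<in> BL (T x) e" if y: "y \<in> X \<inter> W" for y
  proof -
    have yX: "y \<in> X" using y by simp
    have close: "\<bar>y n - x n\<bar> < min d (x n - \<rho>)" using y by (simp add: W_def cyl_def)
    then have yn: "\<rho> < y n" by (auto simp: abs_less_iff)
    have yX1: "y \<in> X1" using X1_iff[OF yX] yn by blast
    have yn01: "y n \<in> {0..1}" using X_D[OF yX, of n] by simp
    have "dist (((gr ^^ n) \<circ> Phi) (y n)) (((gr ^^ n) \<circ> Phi) (x n)) < e"
      using d(2) yn01 close by (simp add: dist_real_def)
    then have "\<bar>T y - T x\<bar> < e" using Tform[OF yX yn] Tform[OF xX n] by (simp add: dist_real_def)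
    moreover have "T y \<le> 1" using T_le1[OF yX1] .
    ultimately have "T y \<in> {T x - e <..< T x + e} \<inter> {..1}" by (auto simp: abs_less_iff)
    then show ?thesis using yX1 by (simp add: h_def BL_def)
  qed
  ultimately show ?thesis by blast
qed

lemma two_div: "2 * real (m div 2) = (if even m then real m else real m - 1)"
proof (cases "even m")
  case True then obtain k where "m = 2 * k" by (auto elim: evenE)
  then show ?thesis by simp
next
  case False then obtain k where "m = 2 * k + 1" by (auto elim: oddE)
  then show ?thesis by simp
qed

lemma hloc_notX1: assumes xX: "x \<in> X" and xn: "x \<notin> X1" and e: "e > 0"
  shows "\<exists>W. openin PP W \<and> x \<in> W \<and> (\<forall>y\<in>X \<inter> W. h y \<in> BR (phi (x 0)) e N)"
proof -
  define a where "a = x 0"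
  have a: "0 \<le> a" "a \<le> \<rho>" using X_D[OF xX, of 0] notX1_low[OF xX xn, of 0] by (auto simp: a_def)
  obtain d where d: "d > 0" "\<forall>z\<in>{0..\<rho>}. dist z a < d \<longrightarrow> dist (phi z) (phi a) < e"
    using phi_cont a e unfolding continuous_on_iff by (meson atLeastAtMost_iff)
  define eta where "eta = min d ((1 - \<rho>) * \<rho>)"
  have eta: "eta > 0" using d r0 r1 by (simp add: eta_def)
  define W where "W = cyl x (N + 2) eta"
  have "openin PP W" by (simp add: W_def cyl_open)
  moreover have "x \<in> W" using eta by (simp add: W_def cyl_mem)
  moreover have "h y \<in> BR (phi a) e N" if y: "y \<in> X \<inter> W" for y
  proof -
    have yX: "y \<in> X" using y by simp
    have close: "\<bar>y i - x i\<bar> < eta" if "i \<le> N + 2" for i using y that by (simp add: W_def cyl_def)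
    have lowK: "y i \<le> \<rho>" if "i \<le> N + 1" for i
    proof (rule ccontr)
      assume "\<not> y i \<le> \<rho>"
      then have yi: "\<rho> < y i" by simp
      have "y (Suc i) = \<rho> + (1 - \<rho>) * y i" using up_eq[OF yX yi] .
      moreover have "(1 - \<rho>) * \<rho> < (1 - \<rho>) * y i" using yi r1 by simp
      ultimately have "\<rho> + (1 - \<rho>) * \<rho> < y (Suc i)" by simp
      moreover have "\<bar>y (Suc i) - x (Suc i)\<bar> < eta" using close[of "Suc i"] that by simp
      moreover have "x (Suc i) \<le> \<rho>" using notX1_low[OF xX xn] .
      moreover have "eta \<le> (1 - \<rho>) * \<rho>" by (simp add: eta_def)
      ultimately show False by (auto simp: abs_less_iff)
    qed
    have y0: "0 \<le> y 0" "y 0 \<le> \<rho>" using X_D[OF yX, of 0] lowK[of 0] by auto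
    have "\<bar>y 0 - a\<bar> < d" using close[of 0] by (simp add: a_def eta_def)
    then have phiclose: "\<bar>phi (y 0) - phi a\<bar> < e" using d(2) y0 by (simp add: dist_real_def)
    show ?thesis
    proof (cases "y \<in> X1")
      case False
      have "phi (y 0) \<in> {z \<in> {0..\<rho>}. \<bar>z - phi a\<bar> < e}" using phi_range[OF y0] phiclose by simp
      then show ?thesis using False by (simp add: h_def BR_def)
    next
      case True
      obtain n0 where n0: "\<rho> < y n0" using X1_ex[OF True] .
      have ex: "\<rho> < y (Suc n0)" using up(1)[OF yX n0] .
      define m where "m = (LEAST m. \<rho> < y (Suc m))"
      have m1: "\<rho> < y (Suc m)" unfolding m_def by (rule LeastI[of _ n0]) (rule ex)
      have mN: "N < m"
      proof (rule ccontr)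
        assume "\<not> N < m"
        then have "Suc m \<le> N + 1" by simp
        then show False using lowK[of "Suc m"] m1 by simp
      qed
      have lowm: "\<forall>i\<le>m. y i \<le> \<rho>"
      proof (intro allI impI)
        fix i assume i: "i \<le> m"
        show "y i \<le> \<rho>"
        proof (cases i)
          case 0 then show ?thesis using y0 by simp
        next
          case (Suc i')
          then have "i' < m" using i by simp
          then have "\<not> \<rho> < y (Suc i')" unfolding m_def by (rule not_less_Least)
          then show ?thesis using Suc by simp
        qed
      qed
      have ym: "y m = (if even m then y 0 else F0 (y 0))" using alt[OF yX lowm] .
      have ym_r: "0 \<le> y m" "y m \<le> \<rho>" using X_D[OF yX, of m] lowm by auto
      have "T y = (gr ^^ Suc m) (Phi (y (Suc m)))" using Tform[OF yX m1] .
      also have "\<dots> = (gr ^^ m) (gr (Phi (y (Suc m))))" by (simp only: funpow_Suc_right o_apply)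
      also have "\<dots> = (gr ^^ m) (Phi (y m))" using gr_Phi[OF yX m1] by simp
      also have "\<dots> = phi (y m) - real m * \<rho>"
        using funpow_gr_low[of "Phi (y m)" m] Phi_low[OF ym_r] phi_range[OF ym_r] by simp
      finally have Ty: "T y = phi (y m) - real m * \<rho>" .
      have "\<bar>T y - cc m (phi a)\<bar> = \<bar>phi (y 0) - phi a\<bar>"
      proof (cases "even m")
        case True
        have "cc m (phi a) = phi a - real m * \<rho>"
          unfolding cc_eq two_div[of m] using True by simp
        then have "T y - cc m (phi a) = phi (y 0) - phi a" unfolding Ty using ym True by simp
        then show ?thesis by simp
      next
        case False
        have "phi (y m) = \<rho> - phi (y 0)" using ym False phi_F0[OF y0] by simp
        moreover have "cc m (phi a) = - phi a - (real m - 1) * \<rho>"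
          unfolding cc_eq two_div[of m] using False by simp
        ultimately have "T y - cc m (phi a) = phi a - phi (y 0)" unfolding Ty by (simp add: algebra_simps)
        then show ?thesis by (simp add: abs_minus_commute)
      qed
      then have "T y \<in> {cc m (phi a) - e <..< cc m (phi a) + e} \<inter> {..1}"
        using phiclose T_le1[OF True] by (auto simp: abs_less_iff)
      then have "T y \<in> (\<Union>n\<in>{n::nat. n > N}. {cc n (phi a) - e <..< cc n (phi a) + e} \<inter> {..1})"
        using mN by (intro UN_I[of m]) auto
      then show ?thesis using True by (simp add: h_def BR_def)
    qed
  qed
  ultimately show ?thesis unfolding a_def by blast
qed

lemma h_cont: "continuous_map (invlim_top fm) (Ytop \<rho>) h"
  unfolding continuous_map
proof (intro conjI allI impI)
  show "h ` topspace (invlim_top fm) \<subseteq> topspace (Ytop \<rho>)"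
    using h_img by (simp add: topspace_XT Ytopspace)
  fix U assume U: "openin (Ytop \<rho>) U"
  show "openin (invlim_top fm) {x \<in> topspace (invlim_top fm). h x \<in> U}"
    unfolding topspace_XT
  proof (subst openin_subopen, intro ballI)
    fix x assume x: "x \<in> {x \<in> X. h x \<in> U}"
    then obtain B where B: "B \<in> Ybasic \<rho> (h x)" "B \<subseteq> U" using U unfolding Yopen by blast
    have "\<exists>W. openin PP W \<and> x \<in> W \<and> (\<forall>y\<in>X \<inter> W. h y \<in> B)"
    proof (cases "x \<in> X1")
      case True
      then obtain e where "e > 0" "B = BL (T x) e" using B by (auto simp: h_def Ybasic_Inl)
      then show ?thesis using hloc_X1[OF True] by blast
    next
      case False
      then obtain e N where "e > 0" "B = BR (phi (x 0)) e N" using B by (auto simp: h_def Ybasic_Inr)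
      then show ?thesis using hloc_notX1[OF _ False] x by blast
    qed
    then obtain W where W: "openin PP W" "x \<in> W" "\<forall>y\<in>X \<inter> W. h y \<in> B" by blast
    have "openin (invlim_top fm) (W \<inter> X)" unfolding invlim_top_def by (rule openin_subtopology_Int[OF W(1)])
    moreover have "x \<in> W \<inter> X" using W x by simp
    moreover have "W \<inter> X \<subseteq> {x \<in> X. h x \<in> U}" using W(3) B(2) by blast
    ultimately show "\<exists>T. openin (invlim_top fm) T \<and> x \<in> T \<and> T \<subseteq> {x \<in> X. h x \<in> U}" by blast
  qed
qed

lemma main:
  "(\<exists>h. homeomorphic_map (invlim_top (fmap \<rho> \<delta> \<gamma> \<alpha>)) (Ytop \<rho>) h
            \<and> (\<forall>x\<in>invlim (fmap \<rho> \<delta> \<gamma> \<alpha>).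
                 h (shift (fmap \<rho> \<delta> \<gamma> \<alpha>) x) = gmap \<rho> (h x))
            \<and> h ` invlim1 (fmap \<rho> \<delta> \<gamma> \<alpha>) = Inl ` {..1}
            \<and> h ` (invlim (fmap \<rho> \<delta> \<gamma> \<alpha>) - invlim1 (fmap \<rho> \<delta> \<gamma> \<alpha>)) = Inr ` {0..\<rho>})
    \<and> homeomorphic_map (Ytop \<rho>) (Ytop \<rho>) (gmap \<rho>)
    \<and> (\<forall>x\<in>{..1}. \<forall>y\<in>{..1}. x < y \<longrightarrow>
           (\<exists>u v. gmap \<rho> (Inl x) = Inl u \<and> gmap \<rho> (Inl y) = Inl v \<and> u < v))
    \<and> gmap \<rho> (Inl 1) = Inl 1
    \<and> (\<forall>x\<in>{0..\<rho>}. gmap \<rho> (gmap \<rho> (Inr x)) = Inr x)"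
proof -
  have hh: "homeomorphic_map (invlim_top fm) (Ytop \<rho>) h"
  proof (rule continuous_imp_homeomorphic_map[OF h_cont X_compact Y_Hausdorff])
    show "h ` topspace (invlim_top fm) = topspace (Ytop \<rho>)" by (simp add: topspace_XT Ytopspace h_img)
    show "inj_on h (topspace (invlim_top fm))" by (simp add: topspace_XT h_inj)
  qed
  have part1: "\<exists>h. homeomorphic_map (invlim_top fm) (Ytop \<rho>) h
            \<and> (\<forall>x\<in>X. h (sh x) = gmap \<rho> (h x))
            \<and> h ` X1 = Inl ` {..1}
            \<and> h ` (X - X1) = Inr ` {0..\<rho>}"
    by (intro exI[of _ h] conjI hh ballI h_conj h_X1 h_notX1)
  obtain g where g: "homeomorphic_maps (invlim_top fm) (Ytop \<rho>) h g"
    using hh unfolding homeomorphic_map_maps ..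
  have gh: "homeomorphic_map (Ytop \<rho>) (invlim_top fm) g" using g unfolding homeomorphic_maps_map by (elim conjE)
  have gid: "\<forall>y \<in> topspace (Ytop \<rho>). h (g y) = y" using g unfolding homeomorphic_maps_map by (elim conjE)
  have gin: "g ` topspace (Ytop \<rho>) \<subseteq> topspace (invlim_top fm)"
    using g unfolding homeomorphic_maps_def by (meson continuous_map_image_subset_topspace)
  have c1: "homeomorphic_map (Ytop \<rho>) (Ytop \<rho>) (h \<circ> (sh \<circ> g))"
    by (rule homeomorphic_map_compose[OF homeomorphic_map_compose[OF gh sh_homeo] hh])
  have part2: "homeomorphic_map (Ytop \<rho>) (Ytop \<rho>) (gmap \<rho>)"
  proof (rule homeomorphic_map_eq[OF c1])
    fix p assume p: "p \<in> topspace (Ytop \<rho>)"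
    then have gp: "g p \<in> X" using gin topspace_XT by blast
    show "(h \<circ> (sh \<circ> g)) p = gmap \<rho> p" using h_conj[OF gp] gid p by simp
  qed
  have part3: "\<forall>x\<in>{..1}. \<forall>y\<in>{..1}. x < y \<longrightarrow>
           (\<exists>u v. gmap \<rho> (Inl x) = Inl u \<and> gmap \<rho> (Inl y) = Inl v \<and> u < v)"
    using gr_strict by (auto simp: gmap_Inl)
  have part4: "gmap \<rho> (Inl 1) = Inl 1" using gr_high[of 1] F1_1 r1 by (simp add: gmap_Inl)
  have part5: "\<forall>x\<in>{0..\<rho>}. gmap \<rho> (gmap \<rho> (Inr x)) = Inr x" by (simp add: gmap_def)
  show ?thesis by (intro conjI part1 part2 part3 part4 part5)
qed

end

theorem theorem3:
  fixes \<rho> \<delta> \<gamma> \<alpha> :: real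
  assumes "0 < \<rho>" "\<rho> < 1" "\<delta> > 0" "\<gamma> > - \<delta> / \<rho>"
    and "- \<delta> / \<rho> < \<alpha>" "\<alpha> < 0"
    and "\<rho> = f0 \<rho> \<delta> \<gamma> \<alpha> 0"
  shows "(\<exists>h. homeomorphic_map (invlim_top (fmap \<rho> \<delta> \<gamma> \<alpha>)) (Ytop \<rho>) h
            \<and> (\<forall>x\<in>invlim (fmap \<rho> \<delta> \<gamma> \<alpha>).
                 h (shift (fmap \<rho> \<delta> \<gamma> \<alpha>) x) = gmap \<rho> (h x))
            \<and> h ` invlim1 (fmap \<rho> \<delta> \<gamma> \<alpha>) = Inl ` {..1}
            \<and> h ` (invlim (fmap \<rho> \<delta> \<gamma> \<alpha>) - invlim1 (fmap \<rho> \<delta> \<gamma> \<alpha>)) = Inr ` {0..\<rho>})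
    \<and> homeomorphic_map (Ytop \<rho>) (Ytop \<rho>) (gmap \<rho>)
    \<and> (\<forall>x\<in>{..1}. \<forall>y\<in>{..1}. x < y \<longrightarrow>
           (\<exists>u v. gmap \<rho> (Inl x) = Inl u \<and> gmap \<rho> (Inl y) = Inl v \<and> u < v))
    \<and> gmap \<rho> (Inl 1) = Inl 1
    \<and> (\<forall>x\<in>{0..\<rho>}. gmap \<rho> (gmap \<rho> (Inr x)) = Inr x)"
proof -
  interpret L \<rho> \<delta> \<gamma> \<alpha> by (rule L.intro) (use assms in auto)
  show ?thesis by (rule main)
qed

end
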